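(* Let $\Omega$ be an infinite set and $A_i\subseteq\Omega$ for $i\in\mathbb{N}$. Define: $\mathcal{F}$ the set of nonempty finite subsets of $\mathbb{N}$, $\tilde{\mathcal{F}}:=\mathcal{F}\cup\{\emptyset\}$, and for $j\in\mathbb{Z}_+$, $\mathcal{F}_j$ the set of subsets of $\mathbb{N}$ of cardinality $j$; $B_\emptyset:=\Omega\setminus\bigcup_{i\in\mathbb{N}}A_i$; $B_\infty:=\limsup A_i=\bigcap_{i\in\mathbb{N}}\bigcup_{j\ge i}A_j$; for $U\in\mathcal{F}$, $A_U:=\bigcap_{i\in U}A_i$, $B_U:=A_U\setminus\bigcup_{i\in\mathbb{N}\setminus U}A_{U\cup\{i\}}$ (the points lying in $A_i$ exactly for $i\in U$), and $A'_U:=A_U\setminus B_\infty$. Then: (1) the sets $B_\infty$ and $B_U$, $U\in\tilde{\mathcal{F}}$, form a countable partition of $\Omega$; (2) $\bigcup_{i\in\mathbb{N}}A_i=B_\infty\cup\bigcup_{U\in\mathcal{F}}B_U$; (3) $A_U=A'_U\cup(A_U\cap B_\infty)$ for $U\in\mathcal{F}$. Assume in addition that $(\Omega,\Sigma,\Pr)$ is a probability space and $A_i\in\Sigma$ for all $i$, and let $S_k:=\sum_{1\le i_1<\cdots<i_k}\Pr(A_{i_1}\cap\cdots\cap A_{i_k})\in[0,\infty]$ for $k\in\mathbb{N}$ and $T_j:=\sum_{U\in\mathcal{F}_j}\Pr(B_U)$ for $j\in\mathbb{Z}_+$. Then: (4) if $S_k<\infty$ for some $k\in\mathbb{N}$,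 then $\Pr(B_\infty)=0$; (5) $\sum_{j\in\mathbb{Z}_+}T_j\le1$, with equality if and only if $\Pr(B_\infty)=0$; (6) if $\Pr(B_\infty)=0$, then $S_k=\sum_{j\in\mathbb{Z}_+}\binom{j+k}{k}T_{j+k}\in[0,\infty]$ for each $k\in\mathbb{N}$ (in the generalized sense: $S_k=\infty$ iff the series diverges); (7) if $S_l<\infty$ for some $l\in\mathbb{N}$, then $S_k<\infty$ for every positive integer $k<l$; and if furthermore $d,r\in\mathbb{Z}_+$ and $k\in\mathbb{N}$ satisfy $2d+k+1\in[1,l]$ and $2r+k\in[1,l]$, then $$\sum_{j=0}^{2d+1}(-1)^j\binom{j+k-1}{k-1}S_{j+k}\le\Pr\Big(\bigcup_{i_1<\cdots<i_k}(A_{i_1}\cap\cdots\cap A_{i_k})\Big)\le\sum_{j=0}^{2r}(-1)^j\binom{j+k-1}{k-1}S_{j+k}.$$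
   Context: $\mathbb{N}$ denotes the positive integers and $\mathbb{Z}_+$ the nonnegative integers; $\mathcal{F}_0=\{\emptyset\}$ and $B_\emptyset$ is as defined. *)

theory Defs
  imports "HOL-Probability.Probability"
begin

text \<open>Indices range over the positive integers {1..}. Events A i for i \<ge> 1.\<close>

definition PosNat :: "nat set" where
  "PosNat = {1..}"

definition FF :: "nat set set" where
  "FF = {U. U \<subseteq> PosNat \<and> finite U \<and> U \<noteq> {}}"

definition FFt :: "nat set set" where
  "FFt = FF \<union> {{}}"

definition FFj :: "nat \<Rightarrow> nat set set" where
  "FFj j = {U. U \<subseteq> PosNat \<and> finite U \<and> card U = j}"

definition Bempty :: "'a set \<Rightarrow> (nat \<Rightarrow> 'a set) \<Rightarrow> 'a set" where
  "Bempty \<Omega> A = \<Omega> - (\<Union>i\<in>PosNat. A i)"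

definition Binf :: "(nat \<Rightarrow> 'a set) \<Rightarrow> 'a set" where
  "Binf A = (\<Inter>i\<in>PosNat. \<Union>j\<in>{i..}. A j)"

text \<open>A_U = intersection of A_i over i in U (used for U nonempty).\<close>
definition AU :: "(nat \<Rightarrow> 'a set) \<Rightarrow> nat set \<Rightarrow> 'a set" where
  "AU A U = (\<Inter>i\<in>U. A i)"

definition BU :: "'a set \<Rightarrow> (nat \<Rightarrow> 'a set) \<Rightarrow> nat set \<Rightarrow> 'a set" where
  "BU \<Omega> A U = (if U = {} then Bempty \<Omega> A
               else AU A U - (\<Union>i\<in>PosNat - U. AU A (insert i U)))"

definition AU' :: "(nat \<Rightarrow> 'a set) \<Rightarrow> nat set \<Rightarrow> 'a set" where
  "AU' A U = AU A U - Binf A"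

definition Ssum :: "'a measure \<Rightarrow> (nat \<Rightarrow> 'a set) \<Rightarrow> nat \<Rightarrow> ennreal" where
  "Ssum M A k = (\<Sum>\<^sub>\<infinity>U\<in>FFj k. emeasure M (AU A U))"

definition Tsum :: "'a measure \<Rightarrow> (nat \<Rightarrow> 'a set) \<Rightarrow> nat \<Rightarrow> ennreal" where
  "Tsum M A j = (\<Sum>\<^sub>\<infinity>U\<in>FFj j. emeasure M (BU (space M) A U))"

end

theory Submission
  imports Defs
begin


lemma alt_partial:
  "(\<Sum>j\<le>m. (-1)^j * real (Suc N choose j)) = (-1)^m * real (N choose m)"
proof (induction m)
  case 0 then show ?case by simp
next
  case (Suc m)
  have "(\<Sum>j\<le>Suc m. (-1)^j * real (Suc N choose j)) = (-1)^m * real (N choose m) + (-1)^Suc m * real (Suc N choose Suc m)"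
    using Suc by simp
  also have "\<dots> = (-1)^Suc m * real (N choose Suc m)" by (simp add: algebra_simps)
  finally show ?case .
qed

lemma choose_swap_id:
  assumes "k \<ge> 1"
  shows "(j + k - 1 choose (k - 1)) * (n choose (j + k - 1)) = (n choose (k - 1)) * ((n + 1 - k) choose j)"
proof (cases "j + k - 1 \<le> n")
  case True
  have "(n choose (j + k - 1)) * (j + k - 1 choose (k - 1)) = (n choose (k - 1)) * ((n - (k - 1)) choose (j + k - 1 - (k - 1)))"
    by (rule choose_mult) (use True in auto)
  moreover have "n - (k - 1) = n + 1 - k" "j + k - 1 - (k - 1) = j" using assms True by auto
  ultimately show ?thesis by (simp add: mult.commute)
next
  case False
  show ?thesis
  proof (cases "k - 1 \<le> n")
    case True
    then have "n + 1 - k < j" using False assms by auto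
    then have "(n + 1 - k) choose j = 0" by simp
    moreover have "n choose (j + k - 1) = 0" using False by simp
    ultimately show ?thesis by (metis mult_0_right)
  next
    case False
    then have "n choose (k - 1) = 0" "n choose (j + k - 1) = 0" by auto
    then show ?thesis by (metis mult_0_right mult_0)
  qed
qed

definition Pb :: "nat \<Rightarrow> nat \<Rightarrow> nat \<Rightarrow> real" where
  "Pb k m n = (\<Sum>j=0..m. (-1)^j * real ((j + k - 1) choose (k - 1)) * real (n choose (j + k)))"

lemma Pb_step:
  assumes k: "k \<ge> 1"
  shows "Pb k m (Suc n) = Pb k m n + real (n choose (k - 1)) * (\<Sum>j\<le>m. (-1)^j * real ((n + 1 - k) choose j))"
proof -
  have "Pb k m (Suc n) = (\<Sum>j=0..m. (-1)^j * real ((j + k - 1) choose (k - 1)) * real (n choose (j + k))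
       + (-1)^j * real ((j + k - 1) choose (k - 1)) * real (n choose (j + k - 1)))"
    unfolding Pb_def
  proof (rule sum.cong[OF refl])
    fix j assume "j \<in> {0..m}"
    have "Suc n choose (j + k) = (n choose (j + k)) + (n choose (j + k - 1))"
      using k by (cases "j + k") auto
    then show "(-1)^j * real ((j + k - 1) choose (k - 1)) * real (Suc n choose (j + k)) =
      (-1)^j * real ((j + k - 1) choose (k - 1)) * real (n choose (j + k))
       + (-1)^j * real ((j + k - 1) choose (k - 1)) * real (n choose (j + k - 1))"
      by (simp add: algebra_simps)
  qed
  also have "\<dots> = Pb k m n + (\<Sum>j=0..m. (-1)^j * real ((j + k - 1) choose (k - 1)) * real (n choose (j + k - 1)))"
    unfolding Pb_def by (simp add: sum.distrib)
  also have "(\<Sum>j=0..m. (-1)^j * real ((j + k - 1) choose (k - 1)) * real (n choose (j + k - 1)))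
     = (\<Sum>j=0..m. real (n choose (k - 1)) * ((-1)^j * real ((n + 1 - k) choose j)))"
  proof (rule sum.cong[OF refl])
    fix j
    have "real ((j + k - 1) choose (k - 1)) * real (n choose (j + k - 1)) = real (n choose (k - 1)) * real ((n + 1 - k) choose j)"
      using choose_swap_id[OF k, of j n] by (metis of_nat_mult)
    then show "(-1)^j * real ((j + k - 1) choose (k - 1)) * real (n choose (j + k - 1)) = real (n choose (k - 1)) * ((-1)^j * real ((n + 1 - k) choose j))"
      by (simp add: algebra_simps)
  qed
  also have "\<dots> = real (n choose (k - 1)) * (\<Sum>j\<le>m. (-1)^j * real ((n + 1 - k) choose j))"
    by (simp add: sum_distrib_left atLeast0AtMost)
  finally show ?thesis .
qed

lemma Pb_sign:
  assumes k: "k \<ge> 1"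
  shows "(-1)^m * (Pb k m n - (if k \<le> n then 1 else 0)) \<ge> 0"
proof (induction n)
  case 0
  have "Pb k m 0 = 0" unfolding Pb_def using k by (intro sum.neutral) auto
  then show ?case using k by simp
next
  case (Suc n)
  define D where "D = real (n choose (k - 1)) * (\<Sum>j\<le>m. (-1)^j * real ((n + 1 - k) choose j))"
  have P: "Pb k m (Suc n) = Pb k m n + D" unfolding D_def by (rule Pb_step[OF k])
  consider "k \<le> n" | "Suc n = k" | "Suc n < k" by linarith
  then show ?case
  proof cases
    case 1
    have "n + 1 - k = Suc (n - k)" using 1 by auto
    then have "D = real (n choose (k - 1)) * ((-1)^m * real ((n - k) choose m))"
      unfolding D_def by (simp add: alt_partial)
    then have "(-1)^m * D \<ge> 0" by (simp add: algebra_simps)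
    moreover have "(-1::real)^m * (Pb k m (Suc n) - 1) = (-1)^m * (Pb k m n - 1) + (-1)^m * D"
      using P by (simp add: algebra_simps)
    ultimately show ?thesis using Suc 1 by auto
  next
    case 2
    have "(\<Sum>j\<le>m. (-1)^j * real (0 choose j)) = (1::real)"
      by (induction m) auto
    then have "D = 1" unfolding D_def using 2 by auto
    then show ?thesis using Suc 2 P by auto
  next
    case 3
    have "n choose (k - 1) = 0" using 3 by simp
    then have "D = 0" unfolding D_def by simp
    then show ?thesis using Suc 3 P by auto
  qed
qed

lemma Pb_odd:
  assumes "k \<ge> 1" "odd m"
  shows "Pb k m n \<le> (if k \<le> n then 1 else 0)"
  using Pb_sign[OF assms(1), of m n] assms(2) by simp

lemma Pb_even:
  assumes "k \<ge> 1" "even m"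
  shows "Pb k m n \<ge> (if k \<le> n then 1 else 0)"
  using Pb_sign[OF assms(1), of m n] assms(2) by simp

lemma choose_mono_top:
  assumes "n \<le> l" shows "n choose k \<le> l choose k"
  using assms
proof (induction rule: dec_induct)
  case base then show ?case by simp
next
  case (step l)
  have "l choose k \<le> Suc l choose k" by (cases k) auto
  then show ?case using step by linarith
qed

lemma choose_bound:
  assumes "k \<le> l"
  shows "n choose k \<le> (l choose k) * (1 + (n choose l))"
proof (cases "n < l")
  case True
  have "n choose k \<le> l choose k" using True by (intro choose_mono_top) simp
  then show ?thesis by (simp add: algebra_simps) 
next
  case False
  have "(n choose l) * (l choose k) = (n choose k) * ((n - k) choose (l - k))"
    using False assms by (intro choose_mult) auto
  moreover have "(n - k) choose (l - k) \<ge> 1"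
  proof -
    have "l - k \<le> n - k" using False assms by simp
    then have "0 < (n - k) choose (l - k)" by (rule zero_less_binomial)
    then show ?thesis by linarith
  qed
  ultimately have "n choose k \<le> (n choose l) * (l choose k)"
    by (metis mult.right_neutral mult_le_mono2)
  then show ?thesis by (simp add: algebra_simps)
qed




definition Sw :: "(nat \<Rightarrow> 'a set) \<Rightarrow> 'a \<Rightarrow> nat set" where
  "Sw A w = {i\<in>PosNat. w \<in> A i}"

lemma Sw_sub: "Sw A w \<subseteq> PosNat" unfolding Sw_def by auto

lemma Binf_iff: "w \<in> Binf A \<longleftrightarrow> infinite (Sw A w)"
proof
  assume "w \<in> Binf A"
  then have h: "\<forall>i\<in>PosNat. \<exists>j\<ge>i. w \<in> A j" unfolding Binf_def by auto
  have "\<forall>m. \<exists>n\<ge>m. n \<in> Sw A w"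
  proof
    fix m
    obtain j where "j \<ge> max m 1" "w \<in> A j" using h[rule_format, of "max m 1"] unfolding PosNat_def by auto
    then show "\<exists>n\<ge>m. n \<in> Sw A w" unfolding Sw_def PosNat_def by auto
  qed
  then show "infinite (Sw A w)" using infinite_nat_iff_unbounded_le by blast
next
  assume "infinite (Sw A w)"
  then have "\<forall>m. \<exists>n\<ge>m. n \<in> Sw A w" using infinite_nat_iff_unbounded_le by blast
  then have "\<exists>j\<in>{i..}. w \<in> A j" for i
  proof -
    obtain n where "n \<ge> i" "n \<in> Sw A w" using \<open>\<forall>m. \<exists>n\<ge>m. n \<in> Sw A w\<close> by blast
    then show ?thesis unfolding Sw_def by auto
  qed
  then show "w \<in> Binf A" unfolding Binf_def by blast
qed

lemma AU_iff: "U \<subseteq> PosNat \<Longrightarrow> w \<in> AU A U \<longleftrightarrow> U \<subseteq> Sw A w"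
  unfolding AU_def Sw_def by auto

lemma BU_eq:
  assumes U: "U \<subseteq> PosNat" and sub: "\<And>i. i \<in> PosNat \<Longrightarrow> A i \<subseteq> \<Omega>"
  shows "BU \<Omega> A U = {w\<in>\<Omega>. Sw A w = U}"
proof (cases "U = {}")
  case True
  have X: "w \<in> Bempty \<Omega> A \<longleftrightarrow> w \<in> \<Omega> \<and> Sw A w = {}" for w
  proof -
    have "Sw A w = {} \<longleftrightarrow> (\<forall>i\<in>PosNat. w \<notin> A i)" unfolding Sw_def by auto
    then show ?thesis unfolding Bempty_def by auto
  qed
  have "BU \<Omega> A U = Bempty \<Omega> A" using True by (simp add: BU_def)
  also have "\<dots> = {w\<in>\<Omega>. Sw A w = {}}" by (intro set_eqI) (simp only: mem_Collect_eq X)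
  finally show ?thesis using True by simp
next
  case False
  then obtain u where u: "u \<in> U" by auto
  have BUf: "BU \<Omega> A U = AU A U - (\<Union>i\<in>PosNat - U. AU A (insert i U))"
    using False unfolding BU_def by simp
  have "w \<in> BU \<Omega> A U \<longleftrightarrow> w \<in> \<Omega> \<and> Sw A w = U" for w
  proof
    assume w: "w \<in> BU \<Omega> A U"
    have wA: "w \<in> AU A U" using w unfolding BUf by simp
    have wn: "\<And>i. i \<in> PosNat - U \<Longrightarrow> w \<notin> AU A (insert i U)" using w unfolding BUf by simp
    have 1: "U \<subseteq> Sw A w" using AU_iff[OF U, of w A] wA by simp
    have 2: "Sw A w \<subseteq> U"
    proof
      fix i assume i: "i \<in> Sw A w"
      then have iP: "i \<in> PosNat" "w \<in> A i" unfolding Sw_def by simp_all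
      show "i \<in> U"
      proof (rule ccontr)
        assume iU: "i \<notin> U"
        have "w \<in> AU A (insert i U)" using wA iP unfolding AU_def by simp
        moreover have "i \<in> PosNat - U" using iP iU by simp
        ultimately show False using wn by simp
      qed
    qed
    have "w \<in> A u" using 1 u unfolding Sw_def by auto
    moreover have "u \<in> PosNat" using u U by auto
    ultimately have "w \<in> \<Omega>" using sub by auto
    then show "w \<in> \<Omega> \<and> Sw A w = U" using 1 2 by simp
  next
    assume w: "w \<in> \<Omega> \<and> Sw A w = U"
    then have wS: "Sw A w = U" by simp
    have "w \<in> AU A U" using AU_iff[OF U, of w A] wS by simp
    moreover have "w \<notin> AU A (insert i U)" if i: "i \<in> PosNat - U" for i
    proof
      assume "w \<in> AU A (insert i U)"
      then have "w \<in> A i" unfolding AU_def by simp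
      then have "i \<in> Sw A w" using i unfolding Sw_def by simp
      then show False using wS i by simp
    qed
    ultimately show "w \<in> BU \<Omega> A U" unfolding BUf by simp
  qed
  then show ?thesis by (simp add: set_eq_iff)
qed

lemma Binf_sub: assumes sub: "\<And>i. i \<in> PosNat \<Longrightarrow> A i \<subseteq> \<Omega>" shows "Binf A \<subseteq> \<Omega>"
proof
  fix w assume "w \<in> Binf A"
  then have "infinite (Sw A w)" by (simp add: Binf_iff)
  then obtain i where "i \<in> Sw A w" by (metis finite.emptyI ex_in_conv)
  then show "w \<in> \<Omega>" using sub unfolding Sw_def by auto
qed

lemma countable_FFj: "countable (FFj k)"
  by (rule countable_subset[OF _ countable_Collect_finite]) (auto simp: FFj_def)

lemma countable_FFt: "countable FFt"
  by (rule countable_subset[OF _ countable_Collect_finite]) (auto simp: FFt_def FF_def)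

lemma set_parts:
  fixes \<Omega> :: "'a set" and A :: "nat \<Rightarrow> 'a set"
  assumes sub: "\<And>i. i \<in> PosNat \<Longrightarrow> A i \<subseteq> \<Omega>"
  shows
    "(countable FFt \<and> disjoint_family_on (BU \<Omega> A) FFt
      \<and> (\<forall>U\<in>FFt. BU \<Omega> A U \<inter> Binf A = {})
      \<and> Binf A \<union> (\<Union>U\<in>FFt. BU \<Omega> A U) = \<Omega>)
    \<and> ((\<Union>i\<in>PosNat. A i) = Binf A \<union> (\<Union>U\<in>FF. BU \<Omega> A U))
    \<and> (\<forall>U\<in>FF. AU A U = AU' A U \<union> (AU A U \<inter> Binf A))"
proof -
  have FFt_sub: "U \<in> FFt \<Longrightarrow> U \<subseteq> PosNat \<and> finite U" for U unfolding FFt_def FF_def by auto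
  have BUe: "U \<in> FFt \<Longrightarrow> BU \<Omega> A U = {w\<in>\<Omega>. Sw A w = U}" for U
  proof -
    assume "U \<in> FFt"
    then have "U \<subseteq> PosNat" using FFt_sub by simp
    then show ?thesis by (rule BU_eq[OF _ sub])
  qed
  have d: "disjoint_family_on (BU \<Omega> A) FFt"
    unfolding disjoint_family_on_def
  proof (intro ballI impI)
    fix m n assume m: "m \<in> FFt" and n: "n \<in> FFt" and mn: "m \<noteq> n"
    show "BU \<Omega> A m \<inter> BU \<Omega> A n = {}" using BUe[OF m] BUe[OF n] mn by auto
  qed
  have e: "\<forall>U\<in>FFt. BU \<Omega> A U \<inter> Binf A = {}"
  proof
    fix U assume U: "U \<in> FFt"
    then have "finite U" using FFt_sub by simp
    then show "BU \<Omega> A U \<inter> Binf A = {}" using BUe[OF U] by (auto simp: Binf_iff)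
  qed
  have u: "Binf A \<union> (\<Union>U\<in>FFt. BU \<Omega> A U) = \<Omega>"
  proof
    have "BU \<Omega> A U \<subseteq> \<Omega>" if "U \<in> FFt" for U using BUe[OF that] by auto
    then show "Binf A \<union> (\<Union>U\<in>FFt. BU \<Omega> A U) \<subseteq> \<Omega>" using Binf_sub[OF sub]
      by (intro Un_least UN_least) auto
    show "\<Omega> \<subseteq> Binf A \<union> (\<Union>U\<in>FFt. BU \<Omega> A U)"
    proof
      fix w assume w: "w \<in> \<Omega>"
      show "w \<in> Binf A \<union> (\<Union>U\<in>FFt. BU \<Omega> A U)"
      proof (cases "finite (Sw A w)")
        case True
        have "Sw A w \<subseteq> PosNat" by (rule Sw_sub)
        then have SF: "Sw A w \<in> FFt" using True unfolding FFt_def FF_def by auto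
        have "w \<in> BU \<Omega> A (Sw A w)" using BUe[OF SF] w by simp
        then show ?thesis using SF by blast
      next
        case False
        then have "w \<in> Binf A" by (simp add: Binf_iff)
        then show ?thesis by simp
      qed
    qed
  qed
  have FF_FFt: "U \<in> FF \<Longrightarrow> U \<in> FFt" for U unfolding FFt_def by simp
  have two: "(\<Union>i\<in>PosNat. A i) = Binf A \<union> (\<Union>U\<in>FF. BU \<Omega> A U)"
  proof
    show "(\<Union>i\<in>PosNat. A i) \<subseteq> Binf A \<union> (\<Union>U\<in>FF. BU \<Omega> A U)"
    proof
      fix w assume "w \<in> (\<Union>i\<in>PosNat. A i)"
      then obtain i where i: "i \<in> PosNat" "w \<in> A i" by auto
      then have w: "w \<in> \<Omega>" using sub by auto
      have ne: "i \<in> Sw A w" using i unfolding Sw_def by simp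
      show "w \<in> Binf A \<union> (\<Union>U\<in>FF. BU \<Omega> A U)"
      proof (cases "finite (Sw A w)")
        case True
        have "Sw A w \<subseteq> PosNat" by (rule Sw_sub)
        then have SF: "Sw A w \<in> FF" using True ne unfolding FF_def by auto
        have "w \<in> BU \<Omega> A (Sw A w)" using BUe[OF FF_FFt[OF SF]] w by simp
        then show ?thesis using SF by blast
      next
        case False
        then have "w \<in> Binf A" by (simp add: Binf_iff)
        then show ?thesis by simp
      qed
    qed
    show "Binf A \<union> (\<Union>U\<in>FF. BU \<Omega> A U) \<subseteq> (\<Union>i\<in>PosNat. A i)"
    proof
      fix w assume "w \<in> Binf A \<union> (\<Union>U\<in>FF. BU \<Omega> A U)"
      then obtain i where "i \<in> Sw A w"
      proof
        assume "w \<in> Binf A"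
        then have "infinite (Sw A w)" by (simp add: Binf_iff)
        then have "Sw A w \<noteq> {}" by auto
        then show ?thesis using that by auto
      next
        assume "w \<in> (\<Union>U\<in>FF. BU \<Omega> A U)"
        then obtain U where U: "U \<in> FF" "w \<in> BU \<Omega> A U" by auto
        then have "Sw A w = U" using BUe[OF FF_FFt[OF U(1)]] by simp
        moreover have "U \<noteq> {}" using U(1) unfolding FF_def by simp
        ultimately show ?thesis using that by auto
      qed
      then show "w \<in> (\<Union>i\<in>PosNat. A i)" unfolding Sw_def by auto
    qed
  qed
  have three: "\<forall>U\<in>FF. AU A U = AU' A U \<union> (AU A U \<inter> Binf A)"
    unfolding AU'_def by blast
  show ?thesis using countable_FFt d e u two three by metis
qed




lemma infsum_count:
  fixes f :: "'b \<Rightarrow> ennreal"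
  assumes "countable X"
  shows "infsum f X = (\<integral>\<^sup>+x. f x \<partial>count_space X)"
proof (cases "finite X")
  case True
  then show ?thesis by (simp add: nn_integral_count_space_finite)
next
  case False
  let ?g = "from_nat_into X"
  have b: "bij_betw ?g UNIV X" using bij_betw_from_nat_into[OF assms False] .
  have "infsum f X = infsum (\<lambda>n. f (?g n)) UNIV"
    by (rule infsum_reindex_bij_betw[OF b, symmetric])
  also have "\<dots> = (\<Sum>n. f (?g n))"
  proof -
    have "((\<lambda>n. f (?g n)) has_sum infsum (\<lambda>n. f (?g n)) UNIV) UNIV"
      by (rule has_sum_infsum) (rule nonneg_summable_on_complete, simp)
    then have "(\<lambda>n. f (?g n)) sums infsum (\<lambda>n. f (?g n)) UNIV" by (rule has_sum_imp_sums)
    then show ?thesis by (simp add: sums_iff)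
  qed
  also have "\<dots> = (\<integral>\<^sup>+n. f (?g n) \<partial>count_space UNIV)" by (simp add: nn_integral_count_space_nat)
  also have "\<dots> = (\<integral>\<^sup>+x. f x \<partial>count_space X)" by (rule nn_integral_bij_count_space[OF b])
  finally show ?thesis .
qed

lemma inner_count:
  assumes k: "k \<ge> 1"
  shows "(\<integral>\<^sup>+U. indicator (AU A U) w \<partial>count_space (FFj k)) =
    (if finite (Sw A w) then of_nat (card (Sw A w) choose k) else \<infinity>)"
proof -
  let ?X = "{U\<in>FFj k. U \<subseteq> Sw A w}"
  have "(\<integral>\<^sup>+U. indicator (AU A U) w \<partial>count_space (FFj k)) = (\<integral>\<^sup>+U. indicator ?X U \<partial>count_space (FFj k))"
  proof (rule nn_integral_cong)
    fix U assume "U \<in> space (count_space (FFj k))"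
    then have "U \<in> FFj k" by simp
    then have "U \<subseteq> PosNat" unfolding FFj_def by auto
    then show "indicator (AU A U) w = indicator ?X U" using AU_iff[of U w A] \<open>U \<in> FFj k\<close>
      by (simp add: indicator_def)
  qed
  also have "\<dots> = emeasure (count_space (FFj k)) ?X" by (rule nn_integral_indicator) auto
  also have "\<dots> = (if finite ?X then of_nat (card ?X) else \<infinity>)" by (rule emeasure_count_space) auto
  also have "\<dots> = (if finite (Sw A w) then of_nat (card (Sw A w) choose k) else \<infinity>)"
  proof (cases "finite (Sw A w)")
    case True
    have eq: "?X = {U. U \<subseteq> Sw A w \<and> card U = k}"
      using Sw_sub[of A w] True unfolding FFj_def by (auto intro: finite_subset)
    have "finite ?X" unfolding eq using True by simp
    then show ?thesis using True eq n_subsets[OF True] by simp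
  next
    case False
    obtain F where F: "F \<subseteq> Sw A w" "finite F" "card F = k - 1"
      using infinite_arbitrarily_large[OF False] by blast
    have inf: "infinite (Sw A w - F)" using False F by simp
    have "(\<lambda>i. insert i F) ` (Sw A w - F) \<subseteq> ?X"
      using F k Sw_sub[of A w] unfolding FFj_def by (auto simp: card_insert_if)
    moreover have "inj_on (\<lambda>i. insert i F) (Sw A w - F)"
      unfolding inj_on_def by blast
    ultimately have "infinite ?X" using inf by (meson finite_imageD finite_subset)
    then show ?thesis using False by simp
  qed
  finally show ?thesis .
qed

locale PS = prob_space M for M :: "'a measure" +
  fixes A :: "nat \<Rightarrow> 'a set"
  assumes meas: "\<And>i. i \<in> PosNat \<Longrightarrow> A i \<in> sets M"
begin

lemma subsp: "i \<in> PosNat \<Longrightarrow> A i \<subseteq> space M" using meas sets.sets_into_space by blast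

definition E :: "nat \<Rightarrow> 'a set" where
  "E n = {w\<in>space M. finite (Sw A w) \<and> card (Sw A w) = n}"

definition N :: "'a \<Rightarrow> nat" where "N w = card (Sw A w)"

lemma countable_PosNat: "countable PosNat" by simp

lemma Sset_meas: "{w\<in>space M. Sw A w = U} \<in> sets M"
proof -
  have "{w\<in>space M. Sw A w = U} = {w\<in>space M. U \<subseteq> PosNat \<and> (\<forall>i\<in>PosNat. (w \<in> A i \<longleftrightarrow> i \<in> U))}"
    unfolding Sw_def by auto
  also have "\<dots> \<in> sets M"
  proof (cases "U \<subseteq> PosNat")
    case True
    have "{w\<in>space M. \<forall>i\<in>PosNat. (w \<in> A i \<longleftrightarrow> i \<in> U)} \<in> sets M"
    proof (rule sets.sets_Collect_countable_All'[OF _ countable_PosNat])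
      fix i assume i: "i \<in> PosNat"
      show "{w\<in>space M. (w \<in> A i \<longleftrightarrow> i \<in> U)} \<in> sets M"
      proof (cases "i \<in> U")
        case True
        then have "{w\<in>space M. (w \<in> A i \<longleftrightarrow> i \<in> U)} = A i" using subsp[OF i] by auto
        then show ?thesis using meas[OF i] by simp
      next
        case False
        then have "{w\<in>space M. (w \<in> A i \<longleftrightarrow> i \<in> U)} = space M - A i" by auto
        then show ?thesis using meas[OF i] by auto
      qed
    qed
    then show ?thesis using True by simp
  qed simp
  finally show ?thesis .
qed

lemma Binf_meas: "Binf A \<in> sets M"
proof -
  have "Binf A = (\<Inter>i\<in>PosNat. \<Union>j\<in>{i..}. A j)" unfolding Binf_def by simp
  also have "\<dots> \<in> sets M"
  proof (rule sets.countable_INT')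
    show "PosNat \<noteq> {}" unfolding PosNat_def by auto
    show "(\<lambda>i. \<Union>j\<in>{i..}. A j) ` PosNat \<subseteq> sets M"
    proof
      fix X assume "X \<in> (\<lambda>i. \<Union>j\<in>{i..}. A j) ` PosNat"
      then obtain i where i: "i \<in> PosNat" "X = (\<Union>j\<in>{i..}. A j)" by auto
      have "(\<Union>j\<in>{i..}. A j) \<in> sets M"
        by (rule sets.countable_UN'') (use i meas in \<open>auto simp: PosNat_def\<close>)
      then show "X \<in> sets M" using i by simp
    qed
  qed simp
  finally show ?thesis .
qed

lemma Binf_space: "Binf A \<subseteq> space M" using Binf_sub[of A "space M"] subsp by blast

lemma E_eq: "E n = (\<Union>U\<in>FFj n. {w\<in>space M. Sw A w = U})"
  unfolding E_def FFj_def Sw_def by auto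

lemma E_meas: "E n \<in> sets M"
  unfolding E_eq by (rule sets.countable_UN''[OF countable_FFj]) (rule Sset_meas)

lemma AU_meas: assumes "k \<ge> 1" "U \<in> FFj k" shows "AU A U \<in> sets M"
proof -
  have U: "U \<subseteq> PosNat" "finite U" "U \<noteq> {}" using assms unfolding FFj_def by auto
  have "(\<lambda>i. A i) ` U \<subseteq> sets M" using U(1) meas by auto
  then show ?thesis unfolding AU_def
    by (intro sets.countable_INT') (simp_all add: U countable_finite)
qed

lemma Tsum_eq: "Tsum M A j = emeasure M (E j)"
proof -
  have "Tsum M A j = (\<integral>\<^sup>+U. emeasure M (BU (space M) A U) \<partial>count_space (FFj j))"
    unfolding Tsum_def by (rule infsum_count[OF countable_FFj])
  also have "\<dots> = (\<integral>\<^sup>+U. emeasure M {w\<in>space M. Sw A w = U} \<partial>count_space (FFj j))"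
  proof (rule nn_integral_cong)
    fix U assume "U \<in> space (count_space (FFj j))"
    then have "U \<subseteq> PosNat" by (simp add: FFj_def)
    then show "emeasure M (BU (space M) A U) = emeasure M {w\<in>space M. Sw A w = U}"
      using BU_eq[OF _ subsp] by simp
  qed
  also have "\<dots> = emeasure M (\<Union>U\<in>FFj j. {w\<in>space M. Sw A w = U})"
    by (rule emeasure_UN_countable[symmetric]) (auto simp: Sset_meas countable_FFj disjoint_family_on_def)
  finally show ?thesis by (simp add: E_eq)
qed

definition g :: "nat \<Rightarrow> 'a \<Rightarrow> ennreal" where
  "g k w = (if finite (Sw A w) then of_nat (card (Sw A w) choose k) else \<infinity>)"

lemma Ssum_eq: assumes k: "k \<ge> 1" shows "Ssum M A k = (\<integral>\<^sup>+w. g k w \<partial>M)"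
proof -
  have "Ssum M A k = (\<integral>\<^sup>+U. emeasure M (AU A U) \<partial>count_space (FFj k))"
    unfolding Ssum_def by (rule infsum_count[OF countable_FFj])
  also have "\<dots> = (\<integral>\<^sup>+U. (\<integral>\<^sup>+w. indicator (AU A U) w \<partial>M) \<partial>count_space (FFj k))"
    by (rule nn_integral_cong) (simp add: AU_meas[OF k])
  also have "\<dots> = (\<integral>\<^sup>+w. (\<integral>\<^sup>+U. indicator (AU A U) w \<partial>count_space (FFj k)) \<partial>M)"
    by (rule nn_integral_count_space_nn_integral[symmetric]) (auto simp: countable_FFj intro!: borel_measurable_indicator AU_meas[OF k])
  also have "\<dots> = (\<integral>\<^sup>+w. g k w \<partial>M)"
    unfolding g_def by (simp add: inner_count[OF k])
  finally show ?thesis .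
qed


end


context PS begin

lemma Binf_null_of_Ssum:
  assumes k: "k \<ge> 1" and fin: "Ssum M A k < \<infinity>"
  shows "emeasure M (Binf A) = 0"
proof -
  have "\<infinity> * emeasure M (Binf A) = (\<integral>\<^sup>+w. \<infinity> * indicator (Binf A) w \<partial>M)"
    by (rule nn_integral_cmult_indicator[symmetric]) (rule Binf_meas)
  also have "\<dots> \<le> (\<integral>\<^sup>+w. g k w \<partial>M)"
    by (rule nn_integral_mono) (auto simp: g_def indicator_def Binf_iff)
  also have "\<dots> < \<infinity>" using fin Ssum_eq[OF k] by simp
  finally show ?thesis by (cases "emeasure M (Binf A) = 0") (auto simp: ennreal_top_mult)
qed

lemma N_meas: "N \<in> measurable M (count_space UNIV)"
proof -
  have "N -` {n} \<inter> space M \<in> sets M" for n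
  proof -
    have "N -` {n} \<inter> space M = E n \<union> (if n = 0 then Binf A else {})"
      using Binf_space unfolding E_def N_def by (auto simp: Binf_iff dest: card_ge_0_finite)
    then show ?thesis using E_meas Binf_meas by auto
  qed
  then show ?thesis by (subst measurable_count_space_eq2_countable) auto
qed

lemma fN_borel: "(\<lambda>w. (f :: nat \<Rightarrow> 'b::topological_space) (N w)) \<in> borel_measurable M"
  by (rule measurable_compose[OF N_meas]) simp

lemma AE_notBinf: "emeasure M (Binf A) = 0 \<Longrightarrow> AE w in M. w \<notin> Binf A"
  by (rule AE_not_in) (simp add: null_sets_def Binf_meas)

lemma Ssum_N:
  assumes k: "k \<ge> 1" and null: "emeasure M (Binf A) = 0"
  shows "Ssum M A k = (\<integral>\<^sup>+w. of_nat (N w choose k) \<partial>M)"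
  unfolding Ssum_eq[OF k]
  by (rule nn_integral_cong_AE) (use AE_notBinf[OF null] in \<open>eventually_elim, auto simp: g_def N_def Binf_iff\<close>)

lemma part5: "(\<Sum>j. Tsum M A j) \<le> 1 \<and> ((\<Sum>j. Tsum M A j) = 1 \<longleftrightarrow> emeasure M (Binf A) = 0)"
proof -
  have "(\<Sum>j. Tsum M A j) = (\<Sum>j. emeasure M (E j))" by (simp add: Tsum_eq)
  also have "\<dots> = emeasure M (\<Union>j. E j)"
  proof (rule suminf_emeasure)
    show "range E \<subseteq> sets M" using E_meas by auto
    show "disjoint_family E" unfolding disjoint_family_on_def E_def by auto
  qed
  also have "(\<Union>j. E j) = space M - Binf A" unfolding E_def by (auto simp: Binf_iff)
  also have "emeasure M (space M - Binf A) = 1 - emeasure M (Binf A)"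
    by (simp add: emeasure_compl Binf_meas emeasure_space_1)
  finally have eq: "(\<Sum>j. Tsum M A j) = 1 - emeasure M (Binf A)" .
  have le1: "emeasure M (Binf A) \<le> 1" by (rule emeasure_le_1)
  show ?thesis unfolding eq
  proof
    show "1 - emeasure M (Binf A) \<le> 1" by (simp add: diff_le_self_ennreal)
    have e: "emeasure M (Binf A) = ennreal (prob (Binf A))" by (rule emeasure_eq_measure)
    have p0: "prob (Binf A) \<ge> 0" "prob (Binf A) \<le> 1" by simp_all
    have "1 - emeasure M (Binf A) = ennreal (1 - prob (Binf A))"
      unfolding e using p0 by (simp add: ennreal_minus[symmetric])
    then show "(1 - emeasure M (Binf A) = 1) = (emeasure M (Binf A) = 0)"
      unfolding e using p0 by simp
  qed
qed

end


context PS begin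

lemmas [measurable] = E_meas Binf_meas

lemma pointwise6:
  assumes w: "w \<in> space M" "w \<notin> Binf A"
  shows "(\<Sum>j. of_nat ((j + k) choose k) * indicator (E (j + k)) w) = (of_nat (N w choose k) :: ennreal)"
proof -
  have fin: "finite (Sw A w)" using w by (simp add: Binf_iff)
  have ind: "indicator (E m) w = (if m = N w then 1 else (0::ennreal))" for m
    using w fin unfolding E_def N_def by (auto simp: indicator_def)
  show ?thesis
  proof (cases "k \<le> N w")
    case True
    have "(\<lambda>j. of_nat ((j + k) choose k) * indicator (E (j + k)) w) =
          (\<lambda>j. if j = N w - k then of_nat ((j + k) choose k) else (0::ennreal))"
    proof (intro ext)
      fix j show "of_nat ((j + k) choose k) * indicator (E (j + k)) w =
          (if j = N w - k then of_nat ((j + k) choose k) else (0::ennreal))"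
        using True by (cases "j + k = N w") (auto simp: ind)
    qed
    moreover have "(\<lambda>j. if j = N w - k then of_nat ((j + k) choose k) else (0::ennreal)) sums of_nat ((N w - k + k) choose k)"
      by (rule sums_single)
    ultimately have "(\<lambda>j. of_nat ((j + k) choose k) * indicator (E (j + k)) w) sums (of_nat (N w choose k) :: ennreal)"
      using True by simp
    then show ?thesis by (rule sums_unique[symmetric])
  next
    case False
    have "(\<lambda>j. of_nat ((j + k) choose k) * indicator (E (j + k)) w) = (\<lambda>j. 0::ennreal)"
      using False by (auto simp: ind)
    then show ?thesis using False by simp
  qed
qed

lemma part6:
  assumes null: "emeasure M (Binf A) = 0" and k: "k \<ge> 1"
  shows "Ssum M A k = (\<Sum>j. of_nat ((j + k) choose k) * Tsum M A (j + k))"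
proof -
  have "(\<Sum>j. of_nat ((j + k) choose k) * Tsum M A (j + k)) =
        (\<Sum>j. \<integral>\<^sup>+w. of_nat ((j + k) choose k) * indicator (E (j + k)) w \<partial>M)"
    by (simp add: Tsum_eq nn_integral_cmult_indicator)
  also have "\<dots> = \<integral>\<^sup>+w. (\<Sum>j. of_nat ((j + k) choose k) * indicator (E (j + k)) w) \<partial>M"
    by (rule nn_integral_suminf[symmetric]) measurable
  also have "\<dots> = \<integral>\<^sup>+w. of_nat (N w choose k) \<partial>M"
    by (rule nn_integral_cong_AE) (use AE_notBinf[OF null] AE_space in \<open>eventually_elim, simp add: pointwise6\<close>)
  finally show ?thesis using Ssum_N[OF k null] by simp
qed

lemma part7a:
  assumes l: "l \<ge> 1" and fin: "Ssum M A l < \<infinity>" and k: "k \<ge> 1" "k < l"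
  shows "Ssum M A k < \<infinity>"
proof -
  have null: "emeasure M (Binf A) = 0" by (rule Binf_null_of_Ssum[OF l fin])
  have "Ssum M A k = \<integral>\<^sup>+w. of_nat (N w choose k) \<partial>M" by (rule Ssum_N[OF k(1) null])
  also have "\<dots> \<le> \<integral>\<^sup>+w. of_nat (l choose k) * (1 + of_nat (N w choose l)) \<partial>M"
  proof (rule nn_integral_mono)
    fix w
    have "N w choose k \<le> (l choose k) * (1 + (N w choose l))" using k by (intro choose_bound) simp
    then have "(of_nat (N w choose k) :: ennreal) \<le> of_nat ((l choose k) * (1 + (N w choose l)))"
      by (rule of_nat_mono)
    then show "(of_nat (N w choose k) :: ennreal) \<le> of_nat (l choose k) * (1 + of_nat (N w choose l))"
      by (simp add: distrib_left)
  qed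
  also have "\<dots> = of_nat (l choose k) * \<integral>\<^sup>+w. (1 + of_nat (N w choose l)) \<partial>M"
    by (rule nn_integral_cmult) (rule fN_borel)
  also have "(\<integral>\<^sup>+w. (1 + of_nat (N w choose l)) \<partial>M) = (\<integral>\<^sup>+w. 1 \<partial>M) + (\<integral>\<^sup>+w. of_nat (N w choose l) \<partial>M)"
  proof (rule nn_integral_add)
    show "(\<lambda>w. of_nat (N w choose l) :: ennreal) \<in> borel_measurable M"
      using fN_borel[of "\<lambda>n. of_nat (n choose l) :: ennreal"] by simp
  qed simp
  also have "\<dots> = 1 + Ssum M A l" using Ssum_N[OF l null] by (simp add: emeasure_space_1)
  also have "of_nat (l choose k) * (1 + Ssum M A l) < \<infinity>"
    using fin by (simp add: ennreal_mult_less_top of_nat_less_top)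
  finally show ?thesis .
qed

end


context PS begin

lemma Sreal:
  assumes i: "i \<ge> 1" and fin: "Ssum M A i < \<infinity>" and null: "emeasure M (Binf A) = 0"
  shows "integrable M (\<lambda>w. real (N w choose i)) \<and> enn2real (Ssum M A i) = integral\<^sup>L M (\<lambda>w. real (N w choose i))"
proof -
  have m: "(\<lambda>w. real (N w choose i)) \<in> borel_measurable M"
    using fN_borel[of "\<lambda>n. real (n choose i)"] by simp
  have eq: "Ssum M A i = (\<integral>\<^sup>+w. ennreal (real (N w choose i)) \<partial>M)"
    using Ssum_N[OF i null] by (simp add: ennreal_of_nat_eq_real_of_nat)
  have fin': "Ssum M A i = ennreal (enn2real (Ssum M A i))" using fin by simp
  have int: "integrable M (\<lambda>w. real (N w choose i))"
    by (rule integrableI_nn_integral_finite[OF m]) (use eq fin' in auto)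
  have "(\<integral>\<^sup>+w. ennreal (real (N w choose i)) \<partial>M) = ennreal (integral\<^sup>L M (\<lambda>w. real (N w choose i)))"
    by (rule nn_integral_eq_integral[OF int]) simp
  then have "Ssum M A i = ennreal (integral\<^sup>L M (\<lambda>w. real (N w choose i)))" using eq by simp
  moreover have "integral\<^sup>L M (\<lambda>w. real (N w choose i)) \<ge> 0" by (rule Bochner_Integration.integral_nonneg) simp
  ultimately show ?thesis using int by simp
qed

lemma bonf:
  assumes l: "l \<ge> 1" and fin: "Ssum M A l < \<infinity>" and k: "k \<ge> 1" and ml: "m + k \<le> l"
  shows "(if odd m then (\<Sum>j=0..m. (-1)^j * real ((j + k - 1) choose (k - 1)) * enn2real (Ssum M A (j + k)))
                  \<le> measure M (\<Union>U\<in>FFj k. AU A U)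
          else measure M (\<Union>U\<in>FFj k. AU A U)
                  \<le> (\<Sum>j=0..m. (-1)^j * real ((j + k - 1) choose (k - 1)) * enn2real (Ssum M A (j + k))))"
proof -
  have null: "emeasure M (Binf A) = 0" by (rule Binf_null_of_Ssum[OF l fin])
  have S: "integrable M (\<lambda>w. real (N w choose (j + k))) \<and>
           enn2real (Ssum M A (j + k)) = integral\<^sup>L M (\<lambda>w. real (N w choose (j + k)))" if j: "j \<in> {0..m}" for j
  proof (rule Sreal[OF _ _ null])
    show "1 \<le> j + k" using k by simp
    show "Ssum M A (j + k) < \<infinity>"
    proof (cases "j + k = l")
      case True then show ?thesis using fin by simp
    next
      case False
      then have "j + k < l" using j ml by simp
      then show ?thesis using part7a[OF l fin] k by simp
    qed
  qed
  define c where "c j = (-1)^j * real ((j + k - 1) choose (k - 1))" for j :: nat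
  have "(\<Sum>j=0..m. (-1)^j * real ((j + k - 1) choose (k - 1)) * enn2real (Ssum M A (j + k)))
      = (\<Sum>j=0..m. integral\<^sup>L M (\<lambda>w. c j * real (N w choose (j + k))))"
    using S by (intro sum.cong) (simp_all add: c_def)
  also have "\<dots> = integral\<^sup>L M (\<lambda>w. \<Sum>j=0..m. c j * real (N w choose (j + k)))"
    by (rule Bochner_Integration.integral_sum[symmetric]) (use S in auto)
  also have "\<dots> = integral\<^sup>L M (\<lambda>w. Pb k m (N w))" unfolding Pb_def c_def by simp
  finally have L: "(\<Sum>j=0..m. (-1)^j * real ((j + k - 1) choose (k - 1)) * enn2real (Ssum M A (j + k)))
      = integral\<^sup>L M (\<lambda>w. Pb k m (N w))" .
  have intP: "integrable M (\<lambda>w. Pb k m (N w))"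
    unfolding Pb_def by (intro Bochner_Integration.integrable_sum integrable_mult_right) (use S in auto)
  define Y where "Y = N -` {n. k \<le> n} \<inter> space M"
  have Ym: "Y \<in> sets M" unfolding Y_def by (rule measurable_sets[OF N_meas]) simp
  define X where "X = (\<Union>U\<in>FFj k. AU A U)"
  have Xm: "X \<in> sets M" unfolding X_def
    by (rule sets.countable_UN''[OF countable_FFj]) (rule AU_meas[OF k])
  have XY: "AE w in M. w \<in> X \<longleftrightarrow> w \<in> Y"
    using AE_notBinf[OF null] AE_space
  proof eventually_elim
    case (elim w)
    then have fin: "finite (Sw A w)" by (simp add: Binf_iff)
    have "w \<in> X \<longleftrightarrow> (\<exists>U. U \<subseteq> Sw A w \<and> card U = k)"
    proof
      assume "w \<in> X"
      then obtain U where U: "U \<in> FFj k" "w \<in> AU A U" unfolding X_def by auto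
      then have "U \<subseteq> Sw A w" using AU_iff[of U w A] unfolding FFj_def by auto
      then show "\<exists>U. U \<subseteq> Sw A w \<and> card U = k" using U unfolding FFj_def by auto
    next
      assume "\<exists>U. U \<subseteq> Sw A w \<and> card U = k"
      then obtain U where U: "U \<subseteq> Sw A w" "card U = k" by auto
      have "U \<subseteq> PosNat" using subset_trans[OF U(1) Sw_sub] .
      moreover have "finite U" using finite_subset[OF U(1) fin] .
      ultimately have "U \<in> FFj k" using U unfolding FFj_def by simp
      moreover have "w \<in> AU A U" using AU_iff[of U w A] U \<open>U \<subseteq> PosNat\<close> by simp
      ultimately show "w \<in> X" unfolding X_def by auto
    qed
    also have "\<dots> \<longleftrightarrow> k \<le> N w"
    proof
      assume "\<exists>U. U \<subseteq> Sw A w \<and> card U = k"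
      then obtain U where U: "U \<subseteq> Sw A w" "card U = k" by auto
      then show "k \<le> N w" unfolding N_def using card_mono[OF fin U(1)] by simp
    next
      assume "k \<le> N w"
      then obtain U where "U \<subseteq> Sw A w" "card U = k" unfolding N_def
        using obtain_subset_with_card_n[of k "Sw A w"] by blast
      then show "\<exists>U. U \<subseteq> Sw A w \<and> card U = k" by auto
    qed
    finally show ?case unfolding Y_def using elim by simp
  qed
  have "measure M X = measure M Y" unfolding measure_def using emeasure_eq_AE[OF XY Xm Ym] by simp
  also have "\<dots> = integral\<^sup>L M (indicator Y)" using Ym sets.sets_into_space[OF Ym]
    by (simp add: Int_absorb2)
  finally have R: "measure M X = integral\<^sup>L M (indicator Y)" .
  have intY: "integrable M (indicator Y :: 'a \<Rightarrow> real)"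
  proof (rule integrable_real_indicator[OF Ym])
    have "emeasure M Y \<le> 1" by (rule emeasure_le_1)
    also have "(1::ennreal) < \<infinity>" by simp
    finally show "emeasure M Y < \<infinity>" .
  qed
  have indY: "indicator Y w = (if k \<le> N w then 1 else (0::real))" if "w \<in> space M" for w
    using that unfolding Y_def by (simp add: indicator_def)
  show ?thesis
  proof (cases "odd m")
    case True
    have "integral\<^sup>L M (\<lambda>w. Pb k m (N w)) \<le> integral\<^sup>L M (indicator Y)"
      by (rule Bochner_Integration.integral_mono[OF intP intY]) (simp add: indY Pb_odd[OF k True])
    then show ?thesis using True L R unfolding X_def by simp
  next
    case False
    have "integral\<^sup>L M (indicator Y) \<le> integral\<^sup>L M (\<lambda>w. Pb k m (N w))"
      by (rule Bochner_Integration.integral_mono[OF intY intP]) (use Pb_even[OF k] False in \<open>simp add: indY\<close>)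
    then show ?thesis using False L R unfolding X_def by simp
  qed
qed

end

context PS begin

lemma bonf_odd:
  assumes l: "l \<ge> 1" and fin: "Ssum M A l < \<infinity>" and k: "k \<ge> 1" and ml: "m + k \<le> l" and odm: "odd m"
  shows "(\<Sum>j=0..m. (-1)^j * real ((j + k - 1) choose (k - 1)) * enn2real (Ssum M A (j + k)))
                  \<le> measure M (\<Union>U\<in>FFj k. AU A U)"
  using bonf[OF l fin k ml] by (simp only: odm not_False_eq_True if_True)

lemma bonf_even:
  assumes l: "l \<ge> 1" and fin: "Ssum M A l < \<infinity>" and k: "k \<ge> 1" and ml: "m + k \<le> l" and evm: "even m"
  shows "measure M (\<Union>U\<in>FFj k. AU A U)
                  \<le> (\<Sum>j=0..m. (-1)^j * real ((j + k - 1) choose (k - 1)) * enn2real (Ssum M A (j + k)))"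
  using bonf[OF l fin k ml] by (simp only: evm not_True_eq_False if_False)

end

theorem proposition3p2:
  fixes \<Omega> :: "'a set" and A :: "nat \<Rightarrow> 'a set"
  assumes inf: "infinite \<Omega>"
    and sub: "\<And>i. i \<in> PosNat \<Longrightarrow> A i \<subseteq> \<Omega>"
  shows
    \<comment> \<open>(1) countable partition\<close>
    "(countable FFt \<and> disjoint_family_on (BU \<Omega> A) FFt
      \<and> (\<forall>U\<in>FFt. BU \<Omega> A U \<inter> Binf A = {})
      \<and> Binf A \<union> (\<Union>U\<in>FFt. BU \<Omega> A U) = \<Omega>)
    \<comment> \<open>(2)\<close>
    \<and> ((\<Union>i\<in>PosNat. A i) = Binf A \<union> (\<Union>U\<in>FF. BU \<Omega> A U))
    \<comment> \<open>(3)\<close>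
    \<and> (\<forall>U\<in>FF. AU A U = AU' A U \<union> (AU A U \<inter> Binf A))
    \<comment> \<open>(4)-(7), in a probability space with sample space \<Omega>\<close>
    \<and> (\<forall>M. prob_space M \<and> space M = \<Omega> \<and> (\<forall>i\<in>PosNat. A i \<in> sets M) \<longrightarrow>
      ((\<exists>k\<in>PosNat. Ssum M A k < \<infinity>) \<longrightarrow> emeasure M (Binf A) = 0)
      \<and> ((\<Sum>j. Tsum M A j) \<le> 1 \<and> ((\<Sum>j. Tsum M A j) = 1 \<longleftrightarrow> emeasure M (Binf A) = 0))
      \<and> (emeasure M (Binf A) = 0 \<longrightarrow>
           (\<forall>k\<in>PosNat. Ssum M A k = (\<Sum>j. of_nat ((j + k) choose k) * Tsum M A (j + k))))
      \<and> (\<forall>l\<in>PosNat. Ssum M A l < \<infinity> \<longrightarrow>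
           (\<forall>k\<in>PosNat. k < l \<longrightarrow> Ssum M A k < \<infinity>)
           \<and> (\<forall>d r k. k \<in> PosNat \<and> 2*d + k + 1 \<le> l \<and> 2*r + k \<le> l \<longrightarrow>
                (\<Sum>j=0..2*d+1. (-1)^j * real ((j + k - 1) choose (k - 1)) * enn2real (Ssum M A (j + k)))
                  \<le> measure M (\<Union>U\<in>FFj k. AU A U)
                \<and> measure M (\<Union>U\<in>FFj k. AU A U)
                  \<le> (\<Sum>j=0..2*r. (-1)^j * real ((j + k - 1) choose (k - 1)) * enn2real (Ssum M A (j + k))))))"
proof -
  have part123: "(countable FFt \<and> disjoint_family_on (BU \<Omega> A) FFt
      \<and> (\<forall>U\<in>FFt. BU \<Omega> A U \<inter> Binf A = {})
      \<and> Binf A \<union> (\<Union>U\<in>FFt. BU \<Omega> A U) = \<Omega>)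
    \<and> ((\<Union>i\<in>PosNat. A i) = Binf A \<union> (\<Union>U\<in>FF. BU \<Omega> A U))
    \<and> (\<forall>U\<in>FF. AU A U = AU' A U \<union> (AU A U \<inter> Binf A))"
    by (rule set_parts[OF sub])
  have part4567: "\<forall>M. prob_space M \<and> space M = \<Omega> \<and> (\<forall>i\<in>PosNat. A i \<in> sets M) \<longrightarrow>
      ((\<exists>k\<in>PosNat. Ssum M A k < \<infinity>) \<longrightarrow> emeasure M (Binf A) = 0)
      \<and> ((\<Sum>j. Tsum M A j) \<le> 1 \<and> ((\<Sum>j. Tsum M A j) = 1 \<longleftrightarrow> emeasure M (Binf A) = 0))
      \<and> (emeasure M (Binf A) = 0 \<longrightarrow>
           (\<forall>k\<in>PosNat. Ssum M A k = (\<Sum>j. of_nat ((j + k) choose k) * Tsum M A (j + k))))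
      \<and> (\<forall>l\<in>PosNat. Ssum M A l < \<infinity> \<longrightarrow>
           (\<forall>k\<in>PosNat. k < l \<longrightarrow> Ssum M A k < \<infinity>)
           \<and> (\<forall>d r k. k \<in> PosNat \<and> 2*d + k + 1 \<le> l \<and> 2*r + k \<le> l \<longrightarrow>
                (\<Sum>j=0..2*d+1. (-1)^j * real ((j + k - 1) choose (k - 1)) * enn2real (Ssum M A (j + k)))
                  \<le> measure M (\<Union>U\<in>FFj k. AU A U)
                \<and> measure M (\<Union>U\<in>FFj k. AU A U)
                  \<le> (\<Sum>j=0..2*r. (-1)^j * real ((j + k - 1) choose (k - 1)) * enn2real (Ssum M A (j + k)))))"
  proof (intro allI impI)
    fix M assume H: "prob_space M \<and> space M = \<Omega> \<and> (\<forall>i\<in>PosNat. A i \<in> sets M)"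
    have "PS M A" unfolding PS_def PS_axioms_def using H by auto
    then interpret PS M A .
    have c4: "(\<exists>k\<in>PosNat. Ssum M A k < \<infinity>) \<longrightarrow> emeasure M (Binf A) = 0"
    proof
      assume "\<exists>k\<in>PosNat. Ssum M A k < \<infinity>"
      then obtain k where "k \<in> PosNat" "Ssum M A k < \<infinity>" by blast
      then show "emeasure M (Binf A) = 0" using Binf_null_of_Ssum[of k] unfolding PosNat_def by simp
    qed
    have c6: "emeasure M (Binf A) = 0 \<longrightarrow>
           (\<forall>k\<in>PosNat. Ssum M A k = (\<Sum>j. of_nat ((j + k) choose k) * Tsum M A (j + k)))"
    proof (intro impI ballI)
      fix k assume "emeasure M (Binf A) = 0" "k \<in> PosNat"
      then show "Ssum M A k = (\<Sum>j. of_nat ((j + k) choose k) * Tsum M A (j + k))"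
        using part6[of k] unfolding PosNat_def by simp
    qed
    have c7: "\<forall>l\<in>PosNat. Ssum M A l < \<infinity> \<longrightarrow>
           (\<forall>k\<in>PosNat. k < l \<longrightarrow> Ssum M A k < \<infinity>)
           \<and> (\<forall>d r k. k \<in> PosNat \<and> 2*d + k + 1 \<le> l \<and> 2*r + k \<le> l \<longrightarrow>
                (\<Sum>j=0..2*d+1. (-1)^j * real ((j + k - 1) choose (k - 1)) * enn2real (Ssum M A (j + k)))
                  \<le> measure M (\<Union>U\<in>FFj k. AU A U)
                \<and> measure M (\<Union>U\<in>FFj k. AU A U)
                  \<le> (\<Sum>j=0..2*r. (-1)^j * real ((j + k - 1) choose (k - 1)) * enn2real (Ssum M A (j + k))))"
    proof (intro ballI impI conjI allI)
      fix l assume l: "l \<in> PosNat" and fin: "Ssum M A l < \<infinity>"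
      have l1: "l \<ge> 1" using l unfolding PosNat_def by simp
      show "Ssum M A k < \<infinity>" if "k \<in> PosNat" "k < l" for k
        using part7a[OF l1 fin, of k] that unfolding PosNat_def by simp
      fix d r k assume a: "k \<in> PosNat \<and> 2*d + k + 1 \<le> l \<and> 2*r + k \<le> l"
      have k1: "k \<ge> 1" using a unfolding PosNat_def by simp
      show "(\<Sum>j=0..2*d+1. (-1)^j * real ((j + k - 1) choose (k - 1)) * enn2real (Ssum M A (j + k)))
                  \<le> measure M (\<Union>U\<in>FFj k. AU A U)"
        by (rule bonf_odd[OF l1 fin k1]) (use a in simp_all)
      show "measure M (\<Union>U\<in>FFj k. AU A U)
                  \<le> (\<Sum>j=0..2*r. (-1)^j * real ((j + k - 1) choose (k - 1)) * enn2real (Ssum M A (j + k)))"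
        by (rule bonf_even[OF l1 fin k1]) (use a in simp_all)
    qed
    show "((\<exists>k\<in>PosNat. Ssum M A k < \<infinity>) \<longrightarrow> emeasure M (Binf A) = 0)
      \<and> ((\<Sum>j. Tsum M A j) \<le> 1 \<and> ((\<Sum>j. Tsum M A j) = 1 \<longleftrightarrow> emeasure M (Binf A) = 0))
      \<and> (emeasure M (Binf A) = 0 \<longrightarrow>
           (\<forall>k\<in>PosNat. Ssum M A k = (\<Sum>j. of_nat ((j + k) choose k) * Tsum M A (j + k))))
      \<and> (\<forall>l\<in>PosNat. Ssum M A l < \<infinity> \<longrightarrow>
           (\<forall>k\<in>PosNat. k < l \<longrightarrow> Ssum M A k < \<infinity>)
           \<and> (\<forall>d r k. k \<in> PosNat \<and> 2*d + k + 1 \<le> l \<and> 2*r + k \<le> l \<longrightarrow>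
                (\<Sum>j=0..2*d+1. (-1)^j * real ((j + k - 1) choose (k - 1)) * enn2real (Ssum M A (j + k)))
                  \<le> measure M (\<Union>U\<in>FFj k. AU A U)
                \<and> measure M (\<Union>U\<in>FFj k. AU A U)
                  \<le> (\<Sum>j=0..2*r. (-1)^j * real ((j + k - 1) choose (k - 1)) * enn2real (Ssum M A (j + k)))))"
      by (rule conjI[OF c4 conjI[OF part5 conjI[OF c6 c7]]])
  qed
  show ?thesis
    by (rule conjI[OF conjunct1[OF part123] conjI[OF conjunct1[OF conjunct2[OF part123]]
          conjI[OF conjunct2[OF conjunct2[OF part123]] part4567]]])
qed

end
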